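(* For every twin-free bipartite graph $G$ of order $n$, we have $i_{\max}(G) \ge \lfloor n/2\rfloor+1$, and this inequality is sharp.
   Context: $i_{\max}(G)$ denotes the number of maximal independent sets of $G$. A graph is twin-free if no two vertices have the same open neighbourhood. *)

theory Defs
  imports Main
begin

definition simple_graph :: "'a set \<Rightarrow> ('a \<Rightarrow> 'a \<Rightarrow> bool) \<Rightarrow> bool" where
  "simple_graph V E \<longleftrightarrow> finite V \<and> (\<forall>u v. E u v \<longrightarrow> u \<in> V \<and> v \<in> V)
     \<and> (\<forall>u v. E u v \<longrightarrow> E v u) \<and> (\<forall>u. \<not> E u u)"

definition bipartite :: "'a set \<Rightarrow> ('a \<Rightarrow> 'a \<Rightarrow> bool) \<Rightarrow> bool" where
  "bipartite V E \<longleftrightarrow> (\<exists>A B. A \<union> B = V \<and> A \<inter> B = {} \<and>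
     (\<forall>u v. E u v \<longrightarrow> (u \<in> A \<and> v \<in> B) \<or> (u \<in> B \<and> v \<in> A)))"

definition open_nbhd :: "'a set \<Rightarrow> ('a \<Rightarrow> 'a \<Rightarrow> bool) \<Rightarrow> 'a \<Rightarrow> 'a set" where
  "open_nbhd V E v = {u \<in> V. E v u}"

definition twin_free :: "'a set \<Rightarrow> ('a \<Rightarrow> 'a \<Rightarrow> bool) \<Rightarrow> bool" where
  "twin_free V E \<longleftrightarrow> (\<forall>u\<in>V. \<forall>v\<in>V. u \<noteq> v \<longrightarrow> open_nbhd V E u \<noteq> open_nbhd V E v)"

definition independent_set :: "'a set \<Rightarrow> ('a \<Rightarrow> 'a \<Rightarrow> bool) \<Rightarrow> 'a set \<Rightarrow> bool" where
  "independent_set V E S \<longleftrightarrow> S \<subseteq> V \<and> (\<forall>u\<in>S. \<forall>v\<in>S. \<not> E u v)"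

definition maximal_independent_set :: "'a set \<Rightarrow> ('a \<Rightarrow> 'a \<Rightarrow> bool) \<Rightarrow> 'a set \<Rightarrow> bool" where
  "maximal_independent_set V E S \<longleftrightarrow> independent_set V E S \<and>
     (\<forall>T. independent_set V E T \<and> S \<subseteq> T \<longrightarrow> T = S)"

definition i_max :: "'a set \<Rightarrow> ('a \<Rightarrow> 'a \<Rightarrow> bool) \<Rightarrow> nat" where
  "i_max V E = card {S. maximal_independent_set V E S}"

end

theory Submission
  imports Defs
begin

lemma key:
  assumes sg: "simple_graph V E" and tf: "twin_free V E"
    and AB: "A \<union> B = V" "A \<inter> B = {}"
    and cross: "\<forall>u v. E u v \<longrightarrow> (u \<in> A \<and> v \<in> B) \<or> (u \<in> B \<and> v \<in> A)"
    and noiso: "\<forall>a\<in>A. \<exists>b. E a b"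
  shows "card A + 1 \<le> i_max V E"
proof -
  have finV: "finite V" using sg by (simp add: simple_graph_def)
  have inV: "\<And>u v. E u v \<Longrightarrow> u \<in> V \<and> v \<in> V" using sg by (simp add: simple_graph_def)
  have symE: "\<And>u v. E u v \<Longrightarrow> E v u" using sg by (simp add: simple_graph_def)
  define f where "f a = {v\<in>B. \<not> E a v} \<union> {a'\<in>A. \<forall>b. E a' b \<longrightarrow> E a b}" for a
  have misf: "maximal_independent_set V E (f a)" if aA: "a \<in> A" for a
  proof -
    have ind: "independent_set V E (f a)"
      unfolding independent_set_def f_def using AB cross symE by blast
    show ?thesis unfolding maximal_independent_set_def
    proof (intro conjI ind allI impI)
      fix T assume T: "independent_set V E T \<and> f a \<subseteq> T"
      have "T \<subseteq> f a"
      proof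
        fix v assume vT: "v \<in> T"
        have aT: "a \<in> T" using T aA unfolding f_def by auto
        have "v \<in> V" using T vT unfolding independent_set_def by auto
        then consider "v \<in> B" | "v \<in> A" using AB by blast
        then show "v \<in> f a"
        proof cases
          case 1
          then show ?thesis using T aT vT unfolding f_def independent_set_def by auto
        next
          case 2
          have "\<forall>b. E v b \<longrightarrow> E a b"
          proof (intro allI impI, rule ccontr)
            fix b assume "E v b" "\<not> E a b"
            then have "b \<in> B" using cross 2 AB by blast
            then have "b \<in> T" using T \<open>\<not> E a b\<close> unfolding f_def by auto
            then show False using T vT \<open>E v b\<close> unfolding independent_set_def by blast
          qed
          then show ?thesis using 2 unfolding f_def by auto
        qed
      qed
      then show "T = f a" using T by blast
    qed
  qed
  have misB: "maximal_independent_set V E B"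
  proof -
    have ind: "independent_set V E B"
      unfolding independent_set_def using AB cross by blast
    show ?thesis unfolding maximal_independent_set_def
    proof (intro conjI ind allI impI)
      fix T assume T: "independent_set V E T \<and> B \<subseteq> T"
      have "T \<subseteq> B"
      proof
        fix v assume vT: "v \<in> T"
        show "v \<in> B"
        proof (rule ccontr)
          assume "v \<notin> B"
          then have "v \<in> A" using T vT AB unfolding independent_set_def by blast
          then obtain b where "E v b" using noiso by blast
          then have "b \<in> B" using cross \<open>v \<in> A\<close> AB by blast
          then show False using T vT \<open>E v b\<close> unfolding independent_set_def by blast
        qed
      qed
      then show "T = B" using T by blast
    qed
  qed
  have aff: "a \<in> f a" if "a \<in> A" for a using that unfolding f_def by auto
  have inj: "inj_on f A"
  proof
    fix a c assume a: "a \<in> A" and c: "c \<in> A" and eq: "f a = f c"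
    have "c \<in> f a" using eq aff[OF c] by metis
    then have 1: "\<forall>b. E c b \<longrightarrow> E a b" unfolding f_def using c AB by auto
    have "a \<in> f c" using eq aff[OF a] by metis
    then have 2: "\<forall>b. E a b \<longrightarrow> E c b" unfolding f_def using a AB by auto
    have "open_nbhd V E a = open_nbhd V E c" unfolding open_nbhd_def using 1 2 by blast
    then show "a = c" using tf a c AB unfolding twin_free_def by blast
  qed
  have notin: "B \<notin> f ` A" using aff AB by blast
  have fin: "finite {S. maximal_independent_set V E S}"
  proof (rule finite_subset)
    show "{S. maximal_independent_set V E S} \<subseteq> Pow V"
      unfolding maximal_independent_set_def independent_set_def by blast
  qed (use finV in simp)
  have sub: "insert B (f ` A) \<subseteq> {S. maximal_independent_set V E S}"
    using misf misB by blast
  have finA: "finite A" using finV AB finite_subset by blast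
  have "card (insert B (f ` A)) = card A + 1"
    using card_insert_disjoint[OF finite_imageI[OF finA] notin] card_image[OF inj] by simp
  then show ?thesis unfolding i_max_def using card_mono[OF fin sub] by simp
qed

lemma lower:
  assumes sg: "simple_graph V E" and bp: "bipartite V E" and tf: "twin_free V E"
  shows "card V div 2 + 1 \<le> i_max V E"
proof -
  have finV: "finite V" using sg by (simp add: simple_graph_def)
  have inV: "\<And>u v. E u v \<Longrightarrow> u \<in> V \<and> v \<in> V" using sg by (simp add: simple_graph_def)
  have symE: "\<And>u v. E u v \<Longrightarrow> E v u" using sg by (simp add: simple_graph_def)
  obtain A B where AB: "A \<union> B = V" "A \<inter> B = {}"
    and cross: "\<forall>u v. E u v \<longrightarrow> (u \<in> A \<and> v \<in> B) \<or> (u \<in> B \<and> v \<in> A)"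
    using bp unfolding bipartite_def by blast
  define I where "I = {v\<in>V. \<forall>w. \<not> E v w}"
  have finI: "finite I" using finV unfolding I_def by simp
  have "\<forall>x\<in>I. \<forall>y\<in>I. x = y"
  proof (intro ballI)
    fix x y assume "x \<in> I" "y \<in> I"
    then have "open_nbhd V E x = open_nbhd V E y" unfolding open_nbhd_def I_def by auto
    then show "x = y" using tf \<open>x \<in> I\<close> \<open>y \<in> I\<close> unfolding twin_free_def I_def by blast
  qed
  then have cI: "card I \<le> 1" using card_le_Suc0_iff_eq[OF finI] by simp
  have "card V \<le> card ((A - I) \<union> (B - I) \<union> I)"
    by (rule card_mono) (use finV finI AB in auto)
  also have "\<dots> \<le> card (A - I) + card (B - I) + card I"
    by (meson add_mono card_Un_le order_trans le_refl)
  finally have cV: "card V \<le> card (A - I) + card (B - I) + card I" .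
  show ?thesis
  proof (cases "card (B - I) \<le> card (A - I)")
    case True
    have "card (A - I) + 1 \<le> i_max V E"
    proof (rule key[OF sg tf, of _ "B \<union> I"])
      show "(A - I) \<union> (B \<union> I) = V" using AB unfolding I_def by auto
      show "(A - I) \<inter> (B \<union> I) = {}" using AB by auto
      show "\<forall>u v. E u v \<longrightarrow> (u \<in> A - I \<and> v \<in> B \<union> I) \<or> (u \<in> B \<union> I \<and> v \<in> A - I)"
        using cross symE inV unfolding I_def by blast
      show "\<forall>a\<in>A - I. \<exists>b. E a b" using AB unfolding I_def by auto
    qed
    then show ?thesis using cV cI True by linarith
  next
    case False
    have "card (B - I) + 1 \<le> i_max V E"
    proof (rule key[OF sg tf, of _ "A \<union> I"])
      show "(B - I) \<union> (A \<union> I) = V" using AB unfolding I_def by auto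
      show "(B - I) \<inter> (A \<union> I) = {}" using AB by auto
      show "\<forall>u v. E u v \<longrightarrow> (u \<in> B - I \<and> v \<in> A \<union> I) \<or> (u \<in> A \<union> I \<and> v \<in> B - I)"
        using cross symE inV unfolding I_def by blast
      show "\<forall>a\<in>B - I. \<exists>b. E a b" using AB unfolding I_def by auto
    qed
    then show ?thesis using cV cI False by linarith
  qed
qed


definition Eh :: "nat \<Rightarrow> nat \<Rightarrow> nat \<Rightarrow> bool" where
  "Eh k u v \<longleftrightarrow> (u < k \<and> v < 2*k \<and> u + k \<le> v) \<or> (v < k \<and> u < 2*k \<and> v + k \<le> u)"

definition St :: "nat \<Rightarrow> nat \<Rightarrow> nat \<Rightarrow> nat set" where
  "St n k t = {t..<k+t} \<union> {2*k..<n}"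

lemma sharp:
  fixes n :: nat
  defines "k \<equiv> n div 2"
  shows "simple_graph {0..<n} (Eh k) \<and> bipartite {0..<n} (Eh k) \<and> twin_free {0..<n} (Eh k)
            \<and> card {0..<n} = n \<and> i_max {0..<n} (Eh k) = n div 2 + 1"
proof -
  have kn: "2*k \<le> n" "n \<le> 2*k+1" unfolding k_def by auto
  have sg: "simple_graph {0..<n} (Eh k)" unfolding simple_graph_def Eh_def using kn by auto
  have bp: "bipartite {0..<n} (Eh k)" unfolding bipartite_def
    by (rule exI[of _ "{0..<min k n}"], rule exI[of _ "{k..<n}"]) (use kn in \<open>auto simp: Eh_def\<close>)
  have tw: "\<exists>w<n. Eh k u w \<noteq> Eh k v w" if "u < n" "v < n" "u \<noteq> v" for u v
  proof -
    have gen: "\<exists>w<n. Eh k u w \<noteq> Eh k v w" if "u < v" "v < n" for u v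
    proof (cases "u < k")
      case True
      have "Eh k u (u+k)" using True unfolding Eh_def by auto
      moreover have "\<not> Eh k v (u+k)" using True that unfolding Eh_def by auto
      moreover have "u + k < n" using True kn by auto
      ultimately show ?thesis by blast
    next
      case False
      show ?thesis
      proof (cases "v < 2*k")
        case True
        then have "Eh k v (v-k)" using False that unfolding Eh_def by auto
        moreover have "\<not> Eh k u (v-k)" using False that unfolding Eh_def by auto
        moreover have "v - k < n" using that by auto
        ultimately show ?thesis by blast
      next
        case F2: False
        then have "u < 2*k" using that kn by auto
        then have "Eh k u (u-k)" using False that unfolding Eh_def by auto
        moreover have "\<not> Eh k v (u-k)" using F2 unfolding Eh_def by auto
        moreover have "u - k < n" using that by auto
        ultimately show ?thesis by blast
      qed
    qed
    show ?thesis
    proof (cases "u < v")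
      case True then show ?thesis using gen that by blast
    next
      case False then have "v < u" using that by auto
      then show ?thesis using gen[of v u] that by metis
    qed
  qed
  have tf: "twin_free {0..<n} (Eh k)" unfolding twin_free_def open_nbhd_def
  proof (intro ballI impI)
    fix u v assume "u \<in> {0..<n}" "v \<in> {0..<n}" "u \<noteq> v"
    then obtain w where "w < n" "Eh k u w \<noteq> Eh k v w" using tw by auto
    then show "{w \<in> {0..<n}. Eh k u w} \<noteq> {w \<in> {0..<n}. Eh k v w}" by auto
  qed
  have indSt: "independent_set {0..<n} (Eh k) (St n k t)" if "t \<le> k" for t
    using that kn unfolding independent_set_def St_def Eh_def by auto
  have misSt: "maximal_independent_set {0..<n} (Eh k) (St n k t)" if t: "t \<le> k" for t
    unfolding maximal_independent_set_def
  proof (intro conjI indSt[OF t] allI impI)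
    fix T assume T: "independent_set {0..<n} (Eh k) T \<and> St n k t \<subseteq> T"
    have "T \<subseteq> St n k t"
    proof
      fix v assume vT: "v \<in> T"
      have vn: "v < n" using T vT unfolding independent_set_def by auto
      show "v \<in> St n k t"
      proof (rule ccontr)
        assume nv: "v \<notin> St n k t"
        show False
        proof (cases "v < t")
          case True
          have "k + t - 1 \<in> T" using T True t unfolding St_def by auto
          moreover have "Eh k v (k + t - 1)" using True t unfolding Eh_def by auto
          ultimately show False using T vT unfolding independent_set_def by blast
        next
          case False
          then have "k + t \<le> v" "v < 2*k" "t < k" using nv vn kn unfolding St_def by auto
          have "t \<in> T" using T \<open>t < k\<close> unfolding St_def by auto
          moreover have "Eh k t v" using \<open>k + t \<le> v\<close> \<open>v < 2*k\<close> \<open>t < k\<close> unfolding Eh_def by auto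
          ultimately show False using T vT unfolding independent_set_def by blast
        qed
      qed
    qed
    then show "T = St n k t" using T by blast
  qed
  have covered: "\<exists>t\<le>k. S \<subseteq> St n k t" if S: "independent_set {0..<n} (Eh k) S" for S
  proof -
    define t where "t = (LEAST u. (u \<in> S \<and> u < k) \<or> u = k)"
    have tk: "t \<le> k" unfolding t_def by (rule Least_le) simp
    have tmin: "t \<le> u" if "u \<in> S" "u < k" for u unfolding t_def by (rule Least_le) (use that in simp)
    have tin: "t \<in> S" if "t < k"
    proof -
      have "(t \<in> S \<and> t < k) \<or> t = k" unfolding t_def by (rule LeastI[of _ k]) simp
      then show ?thesis using that by simp
    qed
    have "S \<subseteq> St n k t"
    proof
      fix v assume vS: "v \<in> S"
      have vn: "v < n" using S vS unfolding independent_set_def by auto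
      show "v \<in> St n k t"
      proof (cases "v < k")
        case True then show ?thesis using tmin[OF vS True] tk unfolding St_def by auto
      next
        case False
        show ?thesis
        proof (cases "v < k + t")
          case True then show ?thesis using False tk unfolding St_def by auto
        next
          case False2: False
          show ?thesis
          proof (cases "v < 2*k")
            case True
            then have "t < k" using False2 by auto
            then have "t \<in> S" by (rule tin)
            moreover have "Eh k t v" using \<open>t < k\<close> True False2 unfolding Eh_def by auto
            ultimately show ?thesis using S vS unfolding independent_set_def by blast
          next
            case False then show ?thesis using vn unfolding St_def by auto
          qed
        qed
      qed
    qed
    then show ?thesis using tk by blast
  qed
  have eq: "{S. maximal_independent_set {0..<n} (Eh k) S} = St n k ` {0..k}"
  proof
    show "{S. maximal_independent_set {0..<n} (Eh k) S} \<subseteq> St n k ` {0..k}"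
    proof
      fix S assume "S \<in> {S. maximal_independent_set {0..<n} (Eh k) S}"
      then have M: "maximal_independent_set {0..<n} (Eh k) S" by simp
      then obtain t where t: "t \<le> k" "S \<subseteq> St n k t"
        using covered unfolding maximal_independent_set_def by blast
      then have "St n k t = S" using M indSt[OF t(1)] unfolding maximal_independent_set_def by blast
      then show "S \<in> St n k ` {0..k}" using t by auto
    qed
    show "St n k ` {0..k} \<subseteq> {S. maximal_independent_set {0..<n} (Eh k) S}"
      using misSt by auto
  qed
  have inj: "inj_on (St n k) {0..k}"
  proof -
    have "St n k s \<noteq> St n k t" if "s < t" "t \<le> k" for s t
    proof -
      have "s \<in> St n k s" using that unfolding St_def by auto
      moreover have "s \<notin> St n k t" using that unfolding St_def by auto
      ultimately show ?thesis by blast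
    qed
    then show ?thesis unfolding inj_on_def
      by (metis atLeastAtMost_iff linorder_neqE_nat)
  qed
  have "i_max {0..<n} (Eh k) = k + 1"
    unfolding i_max_def eq card_image[OF inj] by simp
  then show ?thesis using sg bp tf k_def by simp
qed

theorem corollary3p2:
  shows "(\<forall>(V :: 'a set) E. simple_graph V E \<and> bipartite V E \<and> twin_free V E \<longrightarrow>
            i_max V E \<ge> card V div 2 + 1)
       \<and> (\<forall>n. \<exists>(V :: nat set) E. simple_graph V E \<and> bipartite V E \<and> twin_free V E
            \<and> card V = n \<and> i_max V E = n div 2 + 1)"
  using lower sharp by blast

end
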